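(* Let $P\subseteq\mathbb{R}^n$ be an $n$-dimensional lattice polytope with $\mathrm{cd}(P)>\lceil\frac{n+1}{2}\rceil$. Then through every vertex of $P$ there is an edge of $P$ whose only lattice points are its two vertices.
   Context: The codegree of $P$ is $\mathrm{cd}(P):=\min\{k\in\mathbb{Z}_{\ge1}:\mathrm{int}(kP)\cap\mathbb{Z}^n\neq\emptyset\}$. *)

theory Defs
  imports "HOL-Analysis.Analysis"
begin

definition lattice_point :: "real ^ 'n \<Rightarrow> bool" where
  "lattice_point x \<longleftrightarrow> (\<forall>i. x $ i \<in> \<int>)"

definition lattice_polytope :: "(real ^ 'n) set \<Rightarrow> bool" where
  "lattice_polytope P \<longleftrightarrow>
     (\<exists>S. finite S \<and> S \<noteq> {} \<and> (\<forall>x\<in>S. lattice_point x) \<and> P = convex hull S)"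

text \<open>Codegree: least k \<ge> 1 such that the interior of kP contains a lattice point.\<close>
definition codegree :: "(real ^ 'n) set \<Rightarrow> nat" where
  "codegree P = (LEAST k::nat. k \<ge> 1 \<and>
                    (\<exists>x. x \<in> interior ((*\<^sub>R) (real k) ` P) \<and> lattice_point x))"

end

theory Submission
  imports Defs
begin

lemma edge_of_polytope_segment:
  fixes E :: "'a::euclidean_space set"
  assumes "polytope P" "E edge_of P"
  obtains a b where "a \<noteq> b" "E = closed_segment a b"
proof -
  have pE: "polytope E" using assms face_of_polytope_polytope edge_of_def by blast
  have d: "aff_dim E = 1" using assms(2) edge_of_def by blast
  then have "E \<noteq> {}" by auto
  moreover have "collinear E" using d by (simp add: collinear_aff_dim)
  ultimately obtain a b where ab: "E = closed_segment a b"
    using compact_convex_collinear_segment polytope_imp_compact polytope_imp_convex pE by metis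
  have "a \<noteq> b" using d ab by auto
  then show ?thesis using ab that by blast
qed

lemma edges_span:
  fixes F :: "'a::euclidean_space set"
  shows "polytope F \<Longrightarrow> aff_dim F = int d \<Longrightarrow> v extreme_point_of F \<Longrightarrow>
     F \<subseteq> affine hull (insert v (\<Union>{E. E edge_of F \<and> v \<in> E}))"
proof (induction d arbitrary: F)
  case 0
  then obtain a where "F = {a}" using aff_dim_eq_0 by (metis of_nat_0)
  then have "F = {v}" using 0 extreme_point_of_def by auto
  then show ?case by (simp add: hull_inc)
next
  case (Suc n)
  show ?case
  proof (cases "n = 0")
    case True
    then have "F edge_of F" using Suc.prems
      by (simp add: edge_of_def face_of_refl polytope_imp_convex)
    then show ?thesis using Suc.prems(3) extreme_point_of_def
      by (metis (no_types, lifting) Union_upper hull_subset insert_subset mem_Collect_eq subset_trans)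
  next
    case False
    have cF: "convex F" using Suc.prems polytope_imp_convex by blast
    have vF: "v \<in> F" using Suc.prems extreme_point_of_def by blast
    have Fne: "F \<noteq> {v}" using Suc.prems by auto
    have fv: "{v} face_of F" using Suc.prems face_of_singleton by blast
    have inter: "{v} = \<Inter>{G. G facet_of F \<and> {v} \<subseteq> G}"
      using face_of_polyhedron[OF polytope_imp_polyhedron[OF Suc.prems(1)] fv] Fne by blast
    obtain G1 where G1: "G1 facet_of F" "v \<in> G1"
    proof -
      have "{G. G facet_of F \<and> {v} \<subseteq> G} \<noteq> {}"
      proof
        assume "{G. G facet_of F \<and> {v} \<subseteq> G} = {}"
        then have "{v} = (UNIV :: 'a set)" using inter by (metis Inter_empty)
        then show False using Fne vF by blast
      qed
      then show ?thesis using that by blast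
    qed
    obtain G2 where G2: "G2 facet_of F" "v \<in> G2" "\<not> G2 \<subseteq> affine hull G1"
    proof -
      have "\<exists>G2. G2 facet_of F \<and> v \<in> G2 \<and> \<not> G2 \<subseteq> affine hull G1"
      proof (rule ccontr)
        assume nt: "\<not> ?thesis"
        have "G1 \<subseteq> G" if G: "G facet_of F" "{v} \<subseteq> G" for G
        proof -
          have "G \<subseteq> affine hull G1" using G nt by blast
          moreover have "G \<subseteq> F" using G facet_of_imp_subset by blast
          moreover have "G1 = affine hull G1 \<inter> F"
            using face_of_imp_eq_affine_Int[OF cF] facet_of_imp_face_of G1 by blast
          ultimately have GG: "G \<subseteq> G1" by blast
          have "G face_of G1"
            using face_of_subset[OF facet_of_imp_face_of[OF G(1)] GG facet_of_imp_subset[OF G1(1)]] .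
          moreover have "aff_dim G = aff_dim G1" using G(1) G1(1) unfolding facet_of_def by simp
          moreover have "convex G1" using G1 facet_of_imp_face_of face_of_imp_convex by blast
          ultimately have "G = G1" using face_of_aff_dim_lt by fastforce
          then show ?thesis by simp
        qed
        then have "G1 \<subseteq> {v}" by (subst inter) blast
        then have "G1 = {v}" using G1 by blast
        then have "aff_dim G1 = 0" by simp
        moreover have "aff_dim G1 = aff_dim F - 1" using G1 facet_of_def by blast
        ultimately show False using Suc.prems False by simp
      qed
      then show ?thesis using that by blast
    qed
    define A where "A = affine hull (insert v (\<Union>{E. E edge_of F \<and> v \<in> E}))"
    have sub: "G \<subseteq> A" if "G facet_of F" "v \<in> G" for G
    proof -
      have "G face_of F" using that facet_of_imp_face_of by blast
      have "polytope G" using face_of_polytope_polytope Suc.prems \<open>G face_of F\<close> by blast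
      moreover have "aff_dim G = int n" using that(1) Suc.prems(2) unfolding facet_of_def by simp
      moreover have "v extreme_point_of G" using extreme_point_of_face \<open>G face_of F\<close> that Suc.prems by blast
      ultimately have "G \<subseteq> affine hull (insert v (\<Union>{E. E edge_of G \<and> v \<in> E}))" using Suc.IH by blast
      also have "\<dots> \<subseteq> A" unfolding A_def
        apply (rule hull_mono)
        using \<open>G face_of F\<close> face_of_trans unfolding edge_of_def by blast
      finally show ?thesis .
    qed
    have "affine hull G1 \<subset> affine hull (G1 \<union> G2)"
      using G2(3) by (metis Un_upper1 Un_upper2 hull_mono hull_subset psubsetI subset_trans)
    then have "aff_dim G1 < aff_dim (G1 \<union> G2)" by (rule aff_dim_psubset)
    moreover have "aff_dim G1 = aff_dim F - 1" using G1 facet_of_def by blast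
    moreover have U: "G1 \<union> G2 \<subseteq> F" using G1 G2 facet_of_imp_subset by blast
    moreover have "aff_dim (G1 \<union> G2) \<le> aff_dim F" using U aff_dim_subset by blast
    ultimately have "aff_dim (G1 \<union> G2) = aff_dim F" by linarith
    then have "affine hull (G1 \<union> G2) = affine hull F" using aff_dim_eq_full_gen U by blast
    moreover have "affine hull (G1 \<union> G2) \<subseteq> A"
      using sub G1 G2 unfolding A_def by (simp add: hull_minimal affine_affine_hull)
    ultimately show ?thesis unfolding A_def by (metis hull_subset subset_trans)
  qed
qed


lemma lattice_point_diff: "lattice_point x \<Longrightarrow> lattice_point y \<Longrightarrow> lattice_point (x - y)"
  unfolding lattice_point_def by auto

lemma edge_vector:
  fixes v w :: "real ^ 'n"
  assumes "x \<in> closed_segment v w" "x \<noteq> v" "x \<noteq> w" "lattice_point x" "lattice_point v" "lattice_point w"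
  shows "\<exists>a. lattice_point a \<and> v + 2 *\<^sub>R a \<in> closed_segment v w \<and>
             closed_segment v w \<subseteq> {v + t *\<^sub>R a |t. True}"
proof -
  obtain s where s: "0 \<le> s" "s \<le> 1" "x = (1 - s) *\<^sub>R v + s *\<^sub>R w"
    using assms(1) unfolding closed_segment_def by blast
  have s0: "s \<noteq> 0" using s assms by auto
  have s1: "s \<noteq> 1" using s assms by auto
  have xv: "x - v = s *\<^sub>R (w - v)" using s by (simp add: algebra_simps)
  have wx: "w - x = (1 - s) *\<^sub>R (w - v)" using s by (simp add: algebra_simps)
  obtain c a where ca: "0 < c" "c \<le> 1/2" "a = c *\<^sub>R (w - v)" "lattice_point a"
  proof (cases "s \<le> 1/2")
    case True
    have "lattice_point (x - v)" using lattice_point_diff assms by blast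
    then show ?thesis using that[of s "x - v"] True s s0 xv by auto
  next
    case False
    have "lattice_point (w - x)" using lattice_point_diff assms by blast
    then show ?thesis using that[of "1 - s" "w - x"] False s s1 wx by auto
  qed
  have e2: "2 *\<^sub>R a = (2*c) *\<^sub>R w - (2*c) *\<^sub>R v" using ca(3) by (simp add: scaleR_diff_right)
  have e: "v + 2 *\<^sub>R a = (1 - 2*c) *\<^sub>R v + (2*c) *\<^sub>R w"
    unfolding e2 by (simp add: algebra_simps)
  have "v + 2 *\<^sub>R a \<in> closed_segment v w"
    unfolding closed_segment_def e
    using ca by auto
  moreover have "closed_segment v w \<subseteq> {v + t *\<^sub>R a |t. True}"
  proof
    fix y assume "y \<in> closed_segment v w"
    then obtain t where "y = (1 - t) *\<^sub>R v + t *\<^sub>R w" unfolding closed_segment_def by blast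
    then have y1: "y = v + t *\<^sub>R (w - v)" by (simp add: algebra_simps)
    have "(t / c) *\<^sub>R a = t *\<^sub>R (w - v)" using ca by simp
    then have "y = v + (t / c) *\<^sub>R a" using y1 by simp
    then show "y \<in> {v + t *\<^sub>R a |t. True}" by blast
  qed
  ultimately show ?thesis using ca by blast
qed


theorem lemma3p3:
  fixes P :: "(real ^ 'n) set"
  assumes "lattice_polytope P"
    and "aff_dim P = int CARD('n)"
    and "int (codegree P) > \<lceil>real (CARD('n) + 1) / 2\<rceil>"
    and "v extreme_point_of P"
  shows "\<exists>E. E edge_of P \<and> v \<in> E \<and>
             {x \<in> E. lattice_point x} = {x. x extreme_point_of E}"
proof (rule ccontr)
  assume neg: "\<not> ?thesis"
  obtain S0 where S0: "finite S0" "\<forall>x\<in>S0. lattice_point x" "P = convex hull S0"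
    using assms(1) unfolding lattice_polytope_def by blast
  have pP: "polytope P" using S0 polytope_convex_hull by blast
  have cP: "convex P" using pP polytope_imp_convex by blast
  have vP: "v \<in> P" using assms(4) extreme_point_of_def by blast
  have extlat: "lattice_point x" if "x extreme_point_of P" for x
    using that S0 extreme_point_of_convex_hull by metis
  define A where "A = {a. lattice_point a \<and> v + 2 *\<^sub>R a \<in> P}"
  have edgeA: "E \<subseteq> {v + t *\<^sub>R a |t a. a \<in> A}" if E: "E edge_of P" "v \<in> E" for E
  proof -
    obtain p q where pq: "p \<noteq> q" "E = closed_segment p q"
      using edge_of_polytope_segment[OF pP E(1)] by blast
    have Ef: "E face_of P" using E edge_of_def by blast
    have "v extreme_point_of E" using extreme_point_of_face[OF Ef] assms(4) E by blast
    then have "v = p \<or> v = q" using pq extreme_point_of_segment by blast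
    then obtain w where w: "E = closed_segment v w" "w \<noteq> v"
      using pq closed_segment_commute by metis
    have extE: "{x. x extreme_point_of E} = {v, w}" using w extreme_point_of_segment by blast
    have wext: "w extreme_point_of P" using extE extreme_point_of_face[OF Ef] by blast
    have lv: "lattice_point v" "lattice_point w" using extlat assms(4) wext by auto
    have "{x \<in> E. lattice_point x} \<noteq> {v, w}" using neg E extE by metis
    moreover have "{v, w} \<subseteq> {x \<in> E. lattice_point x}" using lv w by auto
    ultimately obtain x where x: "x \<in> E" "lattice_point x" "x \<noteq> v" "x \<noteq> w" by blast
    obtain a where a: "lattice_point a" "v + 2 *\<^sub>R a \<in> closed_segment v w"
       "closed_segment v w \<subseteq> {v + t *\<^sub>R a |t. True}"
      using edge_vector[of x v w] x w lv by blast
    have "a \<in> A" unfolding A_def using a w edge_of_imp_subset[OF E(1)] by blast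
    then show ?thesis using a w by blast
  qed
  define L where "L = (+) v ` span A"
  have affL: "affine L" unfolding L_def
    using affine_translation subspace_imp_affine subspace_span by blast
  have "insert v (\<Union>{E. E edge_of P \<and> v \<in> E}) \<subseteq> L"
  proof -
    have "v \<in> L" unfolding L_def using span_zero by force
    moreover have "{v + t *\<^sub>R a |t a. a \<in> A} \<subseteq> L"
      unfolding L_def using span_mul span_base by blast
    ultimately show ?thesis using edgeA by blast
  qed
  then have "affine hull (insert v (\<Union>{E. E edge_of P \<and> v \<in> E})) \<subseteq> L"
    using affL hull_minimal by blast
  moreover have "P \<subseteq> affine hull (insert v (\<Union>{E. E edge_of P \<and> v \<in> E}))"
    using edges_span[OF pP assms(2) assms(4)] .
  ultimately have "affine hull P \<subseteq> L" using affL hull_minimal by (metis subset_trans)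
  moreover have "affine hull P = UNIV" using assms(2) aff_dim_eq_full[of P] by simp
  ultimately have LU: "L = UNIV" by blast
  have spanA: "span A = UNIV"
  proof -
    have "z \<in> span A" for z
    proof -
      have "v + z \<in> L" using LU by blast
      then show ?thesis unfolding L_def by auto
    qed
    then show ?thesis by blast
  qed
  obtain B where B: "B \<subseteq> A" "independent B" "A \<subseteq> span B"
    using maximal_independent_subset by blast
  have "span A \<subseteq> span B" using B(3) span_minimal subspace_span by blast
  then have spanB: "span B = UNIV" using spanA by blast
  have finB: "finite B" using B independent_imp_finite by blast
  have cardB: "card B = CARD('n)"
    using dim_span_eq_card_independent[OF B(2)] spanB by simp
  define n where "n = CARD('n)"
  define k :: nat where "k = nat \<lceil>real (n + 1) / 2\<rceil>"
  have k2: "real n + 1 \<le> 2 * real k"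
  proof -
    define r where "r = real (n + 1) / 2"
    have r0: "r \<ge> 0" unfolding r_def by simp
    have e: "real k = of_int \<lceil>r\<rceil>" unfolding k_def r_def[symmetric] using r0 by simp
    have h: "2 * r \<le> 2 * of_int \<lceil>r\<rceil>" by simp
    have r2: "real n + 1 = 2 * r" unfolding r_def by simp
    show ?thesis unfolding e r2 using h .
  qed
  have k1: "k \<ge> 1" using k2 by (cases k) auto
  define K where "K = real k"
  define c where "c = 2 * K"
  have K0: "K > 0" unfolding K_def using k1 by simp
  have c0: "c > 0" unfolding c_def using K0 by simp
  have cn: "real n + 1 \<le> c" unfolding c_def K_def using k2 by simp
  define f where "f = (\<lambda>b. K *\<^sub>R v + c *\<^sub>R b)"
  define S where "S = insert (K *\<^sub>R v) (f ` B)"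
  define p where "p = K *\<^sub>R v + sum (\<lambda>b. b) B"
  have nz: "0 \<notin> B" using B(2) dependent_zero by blast
  have injf: "inj_on f B" unfolding f_def inj_on_def using c0 by simp
  have notin: "K *\<^sub>R v \<notin> f ` B" unfolding f_def using c0 nz by auto
  have imgeq: "(\<lambda>x. - (K *\<^sub>R v) + x) ` f ` B = (\<lambda>x. c *\<^sub>R x) ` B"
    unfolding f_def image_image by simp
  have indc: "independent ((\<lambda>x. c *\<^sub>R x) ` B)"
    apply (rule linear_independent_injective_image)
    using B(2) c0 by (auto intro: linear_compose_scale_right simp: inj_on_def linearI scaleR_add_right)
  have aind: "\<not> affine_dependent S"
    unfolding S_def affine_dependent_iff_dependent[OF notin] imgeq using indc by simp
  have finS: "finite S" unfolding S_def using finB by simp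
  have cardS: "card S = n + 1"
    unfolding S_def using finB notin card_image[OF injf] cardB n_def by simp
  define u where "u = (\<lambda>x. if x = K *\<^sub>R v then 1 - real n / c else 1 / c)"
  have ufb: "u (f b) = 1 / c" if "b \<in> B" for b
  proof -
    have "f b \<noteq> K *\<^sub>R v" using notin that by (metis image_eqI)
    then show ?thesis unfolding u_def by simp
  qed
  have upos: "\<forall>x\<in>S. 0 < u x"
  proof
    fix x assume "x \<in> S"
    have "real n / c < 1" using cn c0 by (simp add: divide_less_eq)
    then show "0 < u x" unfolding u_def using c0 by simp
  qed
  have usum: "sum u S = 1"
  proof -
    have "sum u S = u (K *\<^sub>R v) + sum u (f ` B)"
      unfolding S_def using finB notin by simp
    also have "sum u (f ` B) = sum (\<lambda>b. 1 / c) B"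
      using sum.reindex[OF injf, of u] ufb by simp
    also have "\<dots> = real n / c" using cardB n_def by simp
    finally show ?thesis unfolding u_def by simp
  qed
  have uvec: "(\<Sum>x\<in>S. u x *\<^sub>R x) = p"
  proof -
    have "(\<Sum>x\<in>S. u x *\<^sub>R x) = u (K *\<^sub>R v) *\<^sub>R (K *\<^sub>R v) + (\<Sum>x\<in>f ` B. u x *\<^sub>R x)"
      unfolding S_def using finB notin by simp
    also have "(\<Sum>x\<in>f ` B. u x *\<^sub>R x) = (\<Sum>b\<in>B. (1 / c) *\<^sub>R (K *\<^sub>R v) + b)"
    proof -
      have "(\<Sum>x\<in>f ` B. u x *\<^sub>R x) = (\<Sum>b\<in>B. u (f b) *\<^sub>R f b)"
        using sum.reindex[OF injf, of "\<lambda>x. u x *\<^sub>R x"] by simp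
      also have "\<dots> = (\<Sum>b\<in>B. (1 / c) *\<^sub>R (K *\<^sub>R v) + b)"
        apply (rule sum.cong[OF refl])
        using ufb c0 unfolding f_def by (simp add: scaleR_add_right)
      finally show ?thesis .
    qed
    also have "\<dots> = real n *\<^sub>R ((1 / c) *\<^sub>R (K *\<^sub>R v)) + sum (\<lambda>b. b) B"
      unfolding sum.distrib sum_constant_scaleR cardB n_def ..
    finally have "(\<Sum>x\<in>S. u x *\<^sub>R x) = (1 - real n / c) *\<^sub>R (K *\<^sub>R v) + (real n / c) *\<^sub>R (K *\<^sub>R v) + sum (\<lambda>b. b) B"
      unfolding u_def by simp
    also have "\<dots> = ((1 - real n / c) + real n / c) *\<^sub>R (K *\<^sub>R v) + sum (\<lambda>b. b) B"
      by (simp only: scaleR_add_left)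
    also have "\<dots> = K *\<^sub>R v + sum (\<lambda>b. b) B"
      by simp
    finally show ?thesis unfolding p_def .
  qed
  have "p \<in> interior (convex hull S)"
    unfolding interior_convex_hull_explicit_minimal[OF aind] using cardS n_def upos usum uvec
    by auto
  moreover have "convex hull S \<subseteq> (*\<^sub>R) K ` P"
  proof (rule hull_minimal)
    show "convex ((*\<^sub>R) K ` P)" using convex_scaling[OF cP] by simp
    show "S \<subseteq> (*\<^sub>R) K ` P"
    proof
      fix x assume "x \<in> S"
      then consider "x = K *\<^sub>R v" | b where "b \<in> B" "x = f b" unfolding S_def by blast
      then show "x \<in> (*\<^sub>R) K ` P"
      proof cases
        case 1 then show ?thesis using vP by blast
      next
        case 2
        then have "v + 2 *\<^sub>R b \<in> P" using B(1) unfolding A_def by blast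
        moreover have "x = K *\<^sub>R (v + 2 *\<^sub>R b)" using 2 unfolding f_def c_def by (simp add: scaleR_add_right)
        ultimately show ?thesis by blast
      qed
    qed
  qed
  ultimately have pint: "p \<in> interior ((*\<^sub>R) (real k) ` P)"
    unfolding K_def using interior_mono by blast
  have plat: "lattice_point p"
  proof -
    have lv: "lattice_point v" using extlat assms(4) by blast
    have lb: "\<And>b i. b \<in> B \<Longrightarrow> b $ i \<in> \<int>" using B(1) unfolding A_def lattice_point_def by blast
    show ?thesis unfolding lattice_point_def p_def K_def
      using lv lb unfolding lattice_point_def by (auto intro!: Ints_add Ints_mult Ints_sum)
  qed
  have "codegree P \<le> k"
    unfolding codegree_def by (rule Least_le) (use k1 pint plat in blast)
  moreover have "int (codegree P) > int k" using assms(3) unfolding k_def n_def by simp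
  ultimately show False by simp
qed

end
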